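(* Let $F$ and $G$ be experiments on the state space $\Theta=\{\theta_0,\ldots,\theta_n\}$ with densities $f(\cdot\mid\theta)$ on $\mathcal{X}$ and $g(\cdot\mid\theta)$ on $\mathcal{Y}$, and assume $f(x\mid\theta_0)>0$ for all $x\in\mathcal{X}$ and $g(y\mid\theta_0)>0$ for all $y\in\mathcal{Y}$. Then $F\succeq_{\textup{LB}}G$ if and only if $\boldsymbol{\ell}_F\succeq_{\textup{lcx}}\boldsymbol{\ell}_G$.
   Context: States: $\Theta=\{\theta_0,\ldots,\theta_n\}\subset\mathbb{R}$. An experiment $F$ specifies, for each $\theta$, an absolutely continuous distribution $F(\cdot\mid\theta)$ with density $f(\cdot\mid\theta)$ of a signal $X$ in a compact interval $\mathcal{X}$; likewise $G$ with densities $g(\cdot\mid\theta)$ of a signal $Y$ in a compact interval $\mathcal{Y}$. Let $\widehat{\Delta}_n=\{\boldsymbol{q}\in[0,1]^n:\sum_{i=1}^n q_i\le1\}$; a prior $\boldsymbol{q}$ puts probability $q_i$ on $\theta_i$, $i\ge1$, and $q_0=1-\sum_i q_i$ on $\theta_0$. The posterior vector is $\boldsymbol{p}_F(x;\boldsymbol{q})=(p_{F,i}(x;\boldsymbol{q}))_{i=1}^n$ with $p_{F,i}(x;\boldsymbol{q})=q_if(x\mid\theta_i)/\sum_{j=0}^nq_jf(x\mid\theta_j)$, and $\boldsymbol{p}_F(\boldsymbol{q})$ is the random vector $\boldsymbol{p}_F(X;\boldsymbol{q})$ with $X$ distributed according to the unconditional distribution $\sum_j q_jF(\cdot\mid\theta_j)$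 (analogously for $G$). For random vectors with equal means, $\boldsymbol{\mu}\succeq_{\textup{cx}}\boldsymbol{\nu}$ means $\mathbb{E}[C(\boldsymbol{\mu})]\ge\mathbb{E}[C(\boldsymbol{\nu})]$ for all convex $C$, and $\boldsymbol{\mu}\succeq_{\textup{lcx}}\boldsymbol{\nu}$ means $\boldsymbol{b}\cdot\boldsymbol{\mu}\succeq_{\textup{cx}}\boldsymbol{b}\cdot\boldsymbol{\nu}$ for all $\boldsymbol{b}\in\mathbb{R}^n$. $F\succeq_{\textup{LB}}G$ means $\boldsymbol{p}_F(\boldsymbol{q})\succeq_{\textup{lcx}}\boldsymbol{p}_G(\boldsymbol{q})$ for all $\boldsymbol{q}\in\widehat{\Delta}_n$. Likelihood ratios: $l_{F,i}(x)=f(x\mid\theta_i)/f(x\mid\theta_0)$, $\boldsymbol{\ell}_F(x)=(l_{F,1}(x),\ldots,l_{F,n}(x))$, and $\boldsymbol{\ell}_F$ denotes the random vector $\boldsymbol{\ell}_F(X)$ with $X\sim F(\cdot\mid\theta_0)$; analogously $\boldsymbol{\ell}_G=\boldsymbol{\ell}_G(Y)$ with $Y\sim G(\cdot\mid\theta_0)$, $l_{G,i}=g(\cdot\mid\theta_i)/g(\cdot\mid\theta_0)$. *)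

theory Defs
  imports "HOL-Analysis.Analysis"
begin

text \<open>States are indexed by 0..n (state i = theta_i). Vectors in R^n are functions
  nat => real of which only the coordinates 1..n matter.\<close>

definition sig_space :: "real \<Rightarrow> real \<Rightarrow> real measure" where
  "sig_space a b = restrict_space lborel {a..b}"

definition is_experiment :: "nat \<Rightarrow> real \<Rightarrow> real \<Rightarrow> (nat \<Rightarrow> real \<Rightarrow> real) \<Rightarrow> bool" where
  "is_experiment n a b f \<longleftrightarrow> a \<le> b \<and>
     (\<forall>i\<le>n. f i \<in> borel_measurable (sig_space a b) \<and> (\<forall>x\<in>{a..b}. 0 \<le> f i x) \<and>
        (\<integral>\<^sup>+ x. ennreal (f i x) \<partial>sig_space a b) = 1)"

definition priors :: "nat \<Rightarrow> (nat \<Rightarrow> real) set" where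
  "priors n = {q. (\<forall>i\<in>{1..n}. 0 \<le> q i \<and> q i \<le> 1) \<and> (\<Sum>i=1..n. q i) \<le> 1}"

definition full_prior :: "nat \<Rightarrow> (nat \<Rightarrow> real) \<Rightarrow> nat \<Rightarrow> real" where
  "full_prior n q j = (if j = 0 then 1 - (\<Sum>i=1..n. q i) else q j)"

definition uncond :: "nat \<Rightarrow> real \<Rightarrow> real \<Rightarrow> (nat \<Rightarrow> real \<Rightarrow> real) \<Rightarrow> (nat \<Rightarrow> real) \<Rightarrow> real measure" where
  "uncond n a b f q = density (sig_space a b) (\<lambda>x. ennreal (\<Sum>j\<le>n. full_prior n q j * f j x))"

definition posterior :: "nat \<Rightarrow> (nat \<Rightarrow> real \<Rightarrow> real) \<Rightarrow> (nat \<Rightarrow> real) \<Rightarrow> real \<Rightarrow> nat \<Rightarrow> real" where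
  "posterior n f q x i = q i * f i x / (\<Sum>j\<le>n. full_prior n q j * f j x)"

definition lratio :: "(nat \<Rightarrow> real \<Rightarrow> real) \<Rightarrow> real \<Rightarrow> nat \<Rightarrow> real" where
  "lratio f x i = f i x / f 0 x"

definition state0 :: "real \<Rightarrow> real \<Rightarrow> (nat \<Rightarrow> real \<Rightarrow> real) \<Rightarrow> real measure" where
  "state0 a b f = density (sig_space a b) (\<lambda>x. ennreal (f 0 x))"

text \<open>Extended-real expectation E[h] = E[h^+] - E[h^-] (well-defined in (-inf,+inf]
  whenever the negative part is integrable, e.g. for h = C o Z with C convex and Z integrable).\<close>
definition ext_expect :: "'a measure \<Rightarrow> ('a \<Rightarrow> real) \<Rightarrow> ereal" where
  "ext_expect M h = enn2ereal (\<integral>\<^sup>+ x. ennreal (h x) \<partial>M) - enn2ereal (\<integral>\<^sup>+ x. ennreal (- h x) \<partial>M)"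

definition cx_ge :: "'a measure \<Rightarrow> ('a \<Rightarrow> real) \<Rightarrow> 'b measure \<Rightarrow> ('b \<Rightarrow> real) \<Rightarrow> bool" where
  "cx_ge M X N Y \<longleftrightarrow> integrable M X \<and> integrable N Y \<and>
     integral\<^sup>L M X = integral\<^sup>L N Y \<and>
     (\<forall>C::real \<Rightarrow> real. convex_on UNIV C \<longrightarrow> ext_expect M (C \<circ> X) \<ge> ext_expect N (C \<circ> Y))"

definition lcx_ge :: "nat \<Rightarrow> 'a measure \<Rightarrow> ('a \<Rightarrow> nat \<Rightarrow> real) \<Rightarrow> 'b measure \<Rightarrow> ('b \<Rightarrow> nat \<Rightarrow> real) \<Rightarrow> bool" where
  "lcx_ge n M X N Y \<longleftrightarrow>
     (\<forall>c::nat \<Rightarrow> real. cx_ge M (\<lambda>x. \<Sum>i=1..n. c i * X x i) N (\<lambda>y. \<Sum>i=1..n. c i * Y y i))"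

definition LB_ge :: "nat \<Rightarrow> real \<Rightarrow> real \<Rightarrow> (nat \<Rightarrow> real \<Rightarrow> real) \<Rightarrow> real \<Rightarrow> real \<Rightarrow> (nat \<Rightarrow> real \<Rightarrow> real) \<Rightarrow> bool" where
  "LB_ge n a b f c d g \<longleftrightarrow>
     (\<forall>q\<in>priors n. lcx_ge n (uncond n a b f q) (posterior n f q) (uncond n c d g q) (posterior n g q))"

end

theory Submission
  imports Defs "HOL-Probability.Probability_Measure"
begin

definition dslope :: "(real \<Rightarrow> real) \<Rightarrow> real \<Rightarrow> real" where
  "dslope C t = Sup ((\<lambda>h. (C t - C (t - h)) / h) ` {0<..})"

definition tline :: "(real \<Rightarrow> real) \<Rightarrow> real \<Rightarrow> real \<Rightarrow> real" where
  "tline C t z = C t + dslope C t * (z - t)"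

lemma chord3:
  fixes C :: "real \<Rightarrow> real"
  assumes "convex_on UNIV C" "x < y" "y < z"
  shows "(C y - C x) / (y - x) \<le> (C z - C y) / (z - y)"
proof -
  have "(C x - C y) / (x - y) \<le> (C x - C z) / (x - z)"
       "(C x - C z) / (x - z) \<le> (C y - C z) / (y - z)"
    using convex_on_slope_le[OF assms(1) _ _ assms(2,3)] by auto
  moreover have "(C x - C y) / (x - y) = (C y - C x) / (y - x)"
    by (metis minus_diff_eq minus_divide_divide)
  moreover have "(C y - C z) / (y - z) = (C z - C y) / (z - y)"
    by (metis minus_diff_eq minus_divide_divide)
  ultimately show ?thesis by linarith
qed

lemma left_le_right:
  fixes C :: "real \<Rightarrow> real"
  assumes "convex_on UNIV C" "h > 0" "k > 0"
  shows "(C t - C (t - h)) / h \<le> (C (t + k) - C t) / k"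
  using chord3[OF assms(1), of "t - h" t "t + k"] assms by simp

lemma dslope_ge:
  fixes C :: "real \<Rightarrow> real"
  assumes "convex_on UNIV C" "h > 0"
  shows "(C t - C (t - h)) / h \<le> dslope C t"
  unfolding dslope_def
proof (rule cSup_upper)
  show "(C t - C (t - h)) / h \<in> (\<lambda>h. (C t - C (t - h)) / h) ` {0<..}" using assms by auto
  show "bdd_above ((\<lambda>h. (C t - C (t - h)) / h) ` {0<..})"
    by (rule bdd_aboveI2[where M="(C (t + 1) - C t) / 1"]) (use left_le_right[OF assms(1), of _ 1 t] in auto)
qed

lemma dslope_le:
  fixes C :: "real \<Rightarrow> real"
  assumes "convex_on UNIV C" "k > 0"
  shows "dslope C t \<le> (C (t + k) - C t) / k"
  unfolding dslope_def
  by (rule cSup_least) (use left_le_right[OF assms(1) _ assms(2)] in auto)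

lemma tline_le:
  fixes C :: "real \<Rightarrow> real"
  assumes "convex_on UNIV C"
  shows "tline C t z \<le> C z"
proof (cases z t rule: linorder_cases)
  case less
  have "(C t - C (t - (t - z))) / (t - z) \<le> dslope C t"
    using dslope_ge[OF assms, of "t - z" t] less by simp
  then have "C t - C z \<le> dslope C t * (t - z)" using less by (simp add: divide_le_eq)
  then show ?thesis unfolding tline_def by (simp add: algebra_simps)
next
  case equal then show ?thesis by (simp add: tline_def)
next
  case greater
  have "dslope C t \<le> (C (t + (z - t)) - C t) / (z - t)"
    using dslope_le[OF assms, of "z - t" t] greater by simp
  then have "dslope C t * (z - t) \<le> C z - C t" using greater by (simp add: le_divide_eq)
  then show ?thesis unfolding tline_def by (simp add: algebra_simps)
qed

lemma dslope_mono:
  fixes C :: "real \<Rightarrow> real"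
  assumes "convex_on UNIV C" "s \<le> s'"
  shows "dslope C s \<le> dslope C s'"
proof (cases "s = s'")
  case False
  then have lt: "s < s'" using assms by simp
  have "dslope C s \<le> (C (s + (s' - s)) - C s) / (s' - s)" using dslope_le[OF assms(1), of "s' - s" s] lt by simp
  also have "\<dots> = (C s' - C (s' - (s' - s))) / (s' - s)" by simp
  also have "\<dots> \<le> dslope C s'" using dslope_ge[OF assms(1), of "s' - s" s'] lt by simp
  finally show ?thesis .
qed simp

lemma tline_diff_sign:
  fixes C :: "real \<Rightarrow> real"
  assumes "convex_on UNIV C" "s \<le> s'"
  shows "z \<ge> s' \<Longrightarrow> tline C s' z - tline C s z \<ge> 0"
    and "z \<le> s \<Longrightarrow> tline C s' z - tline C s z \<le> 0"
proof -
  have m: "dslope C s \<le> dslope C s'" by (rule dslope_mono[OF assms])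
  have a: "tline C s s' \<le> C s'" by (rule tline_le[OF assms(1)])
  have b: "tline C s' s \<le> C s" by (rule tline_le[OF assms(1)])
  show "z \<ge> s' \<Longrightarrow> tline C s' z - tline C s z \<ge> 0"
  proof -
    assume z: "z \<ge> s'"
    have "tline C s' z - tline C s z = (C s' - tline C s s') + (dslope C s' - dslope C s) * (z - s')"
      unfolding tline_def by (simp add: algebra_simps)
    moreover have "(dslope C s' - dslope C s) * (z - s') \<ge> 0" using m z by simp
    ultimately show ?thesis using a by linarith
  qed
  show "z \<le> s \<Longrightarrow> tline C s' z - tline C s z \<le> 0"
  proof -
    assume z: "z \<le> s"
    have "tline C s' z - tline C s z = (tline C s' s - C s) + (dslope C s' - dslope C s) * (z - s)"
      unfolding tline_def by (simp add: algebra_simps)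
    moreover have "(dslope C s' - dslope C s) * (z - s) \<le> 0" using m z by (simp add: mult_nonneg_nonpos)
    ultimately show ?thesis using b by linarith
  qed
qed


fun hs :: "(real \<Rightarrow> real) \<Rightarrow> real list \<Rightarrow> real \<Rightarrow> real" where
  "hs C (t # t' # ts) z = max 0 (tline C t' z - tline C t z) + hs C (t' # ts) z"
| "hs C _ z = 0"

lemma hs_nonneg: "hs C ts z \<ge> 0"
  by (induction C ts z rule: hs.induct) auto

lemma hs_zero:
  assumes "convex_on UNIV C" "sorted (t # ts)" "z \<le> t"
  shows "hs C (t # ts) z = 0"
  using assms(2,3)
proof (induction ts arbitrary: t)
  case Nil then show ?case by simp
next
  case (Cons t' ts)
  have "tline C t' z - tline C t z \<le> 0"
    using tline_diff_sign(2)[OF assms(1), of t t' z] Cons.prems by auto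
  moreover have "hs C (t' # ts) z = 0" using Cons by auto
  ultimately show ?case by simp
qed

lemma psi_le:
  assumes "convex_on UNIV C" "sorted (t # ts)"
  shows "tline C t z + hs C (t # ts) z \<le> C z"
  using assms(2)
proof (induction ts arbitrary: t)
  case Nil then show ?case using tline_le[OF assms(1)] by simp
next
  case (Cons t' ts)
  show ?case
  proof (cases "z \<ge> t'")
    case True
    have "tline C t' z - tline C t z \<ge> 0"
      using tline_diff_sign(1)[OF assms(1), of t t' z] Cons.prems True by auto
    then have "tline C t z + hs C (t # t' # ts) z = tline C t' z + hs C (t' # ts) z" by simp
    also have "\<dots> \<le> C z" using Cons by auto
    finally show ?thesis .
  next
    case False
    have "hs C (t' # ts) z = 0" using hs_zero[OF assms(1), of t' ts z] Cons.prems False by auto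
    then have "tline C t z + hs C (t # t' # ts) z = max (tline C t z) (tline C t' z)" by simp
    also have "\<dots> \<le> C z" using tline_le[OF assms(1)] by simp
    finally show ?thesis .
  qed
qed

lemma psi_ge:
  assumes "s \<in> set (t # ts)"
  shows "tline C s z \<le> tline C t z + hs C (t # ts) z"
  using assms
proof (induction ts arbitrary: t)
  case Nil then show ?case by simp
next
  case (Cons t' ts)
  show ?case
  proof (cases "s = t")
    case True then show ?thesis using hs_nonneg[of C "t # t' # ts" z] by simp
  next
    case False
    then have "tline C s z \<le> tline C t' z + hs C (t' # ts) z" using Cons by auto
    then show ?thesis by simp
  qed
qed

locale sl_setting = M: prob_space M + N: prob_space N
  for M :: "'a measure" and N :: "'b measure" +
  fixes X :: "'a \<Rightarrow> real" and Y :: "'b \<Rightarrow> real"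
  assumes intX: "integrable M X" and intY: "integrable N Y"
    and mean: "(\<integral>x. X x \<partial>M) = (\<integral>y. Y y \<partial>N)"
    and stop: "\<And>t. (\<integral>\<^sup>+y. ennreal (Y y - t) \<partial>N) \<le> (\<integral>\<^sup>+x. ennreal (X x - t) \<partial>M)"
begin

definition good :: "(real \<Rightarrow> real) \<Rightarrow> bool" where
  "good h \<longleftrightarrow> integrable M (\<lambda>x. h (X x)) \<and> integrable N (\<lambda>y. h (Y y)) \<and>
     (\<integral>y. h (Y y) \<partial>N) \<le> (\<integral>x. h (X x) \<partial>M)"

lemma good_affine: "good (\<lambda>z. \<alpha> * z + \<beta>)"
proof -
  have iX: "integrable M (\<lambda>x. \<alpha> * X x + \<beta>)" using intX by auto
  have iY: "integrable N (\<lambda>x. \<alpha> * Y x + \<beta>)" using intY by auto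
  have "(\<integral>x. \<alpha> * X x + \<beta> \<partial>M) = \<alpha> * (\<integral>x. X x \<partial>M) + \<beta>"
    using intX by (simp add: M.prob_space)
  moreover have "(\<integral>x. \<alpha> * Y x + \<beta> \<partial>N) = \<alpha> * (\<integral>x. Y x \<partial>N) + \<beta>"
    using intY by (simp add: N.prob_space)
  ultimately show ?thesis using iX iY mean unfolding good_def by simp
qed

lemma good_add: "good h1 \<Longrightarrow> good h2 \<Longrightarrow> good (\<lambda>z. h1 z + h2 z)"
  unfolding good_def by auto

lemma good_hinge: "good (\<lambda>z. max 0 (z - t))"
proof -
  have iX: "integrable M (\<lambda>x. max 0 (X x - t))" using intX by auto
  have iY: "integrable N (\<lambda>x. max 0 (Y x - t))" using intY by auto
  have eX: "(\<integral>\<^sup>+x. ennreal (X x - t) \<partial>M) = ennreal (\<integral>x. max 0 (X x - t) \<partial>M)"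
  proof -
    have "(\<integral>\<^sup>+x. ennreal (X x - t) \<partial>M) = (\<integral>\<^sup>+x. ennreal (max 0 (X x - t)) \<partial>M)"
      by (intro nn_integral_cong) (simp add: max_def ennreal_neg)
    also have "\<dots> = ennreal (\<integral>x. max 0 (X x - t) \<partial>M)"
      by (rule nn_integral_eq_integral[OF iX]) auto
    finally show ?thesis .
  qed
  have eY: "(\<integral>\<^sup>+x. ennreal (Y x - t) \<partial>N) = ennreal (\<integral>x. max 0 (Y x - t) \<partial>N)"
  proof -
    have "(\<integral>\<^sup>+x. ennreal (Y x - t) \<partial>N) = (\<integral>\<^sup>+x. ennreal (max 0 (Y x - t)) \<partial>N)"
      by (intro nn_integral_cong) (simp add: max_def ennreal_neg)
    also have "\<dots> = ennreal (\<integral>x. max 0 (Y x - t) \<partial>N)"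
      by (rule nn_integral_eq_integral[OF iY]) auto
    finally show ?thesis .
  qed
  have "ennreal (\<integral>x. max 0 (Y x - t) \<partial>N) \<le> ennreal (\<integral>x. max 0 (X x - t) \<partial>M)"
    using stop[of t] eX eY by simp
  moreover have "0 \<le> (\<integral>x. max 0 (X x - t) \<partial>M)" by (rule integral_nonneg_AE) auto
  ultimately have "(\<integral>x. max 0 (Y x - t) \<partial>N) \<le> (\<integral>x. max 0 (X x - t) \<partial>M)"
    by (simp add: ennreal_le_iff)
  then show ?thesis using iX iY unfolding good_def by simp
qed

lemma good_cmult: "c \<ge> 0 \<Longrightarrow> good h \<Longrightarrow> good (\<lambda>z. c * h z)"
  unfolding good_def by (auto intro: mult_left_mono)

lemma good_maxlin: "good (\<lambda>z. max 0 (\<alpha> * z + \<beta>))"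
proof (cases "\<alpha> = 0")
  case True
  then show ?thesis using good_affine[of 0 "max 0 \<beta>"] by simp
next
  case False
  have pos: "good (\<lambda>z. max 0 (a * z + b))" if "a > 0" for a b
  proof -
    have "(\<lambda>z. max 0 (a * z + b)) = (\<lambda>z. a * max 0 (z - (- b / a)))"
      using that by (auto simp: fun_eq_iff max_def field_simps)
    then show ?thesis using good_cmult[OF _ good_hinge, of a "- b / a"] that by simp
  qed
  show ?thesis
  proof (cases "\<alpha> > 0")
    case True then show ?thesis using pos by simp
  next
    case False
    then have a: "- \<alpha> > 0" using \<open>\<alpha> \<noteq> 0\<close> by simp
    have "(\<lambda>z. max 0 (\<alpha> * z + \<beta>)) = (\<lambda>z. (\<alpha> * z + \<beta>) + max 0 ((- \<alpha>) * z + (- \<beta>)))"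
      by (auto simp: fun_eq_iff max_def)
    then show ?thesis using good_add[OF good_affine[of \<alpha> \<beta>] pos[OF a, of "- \<beta>"]] by simp
  qed
qed

lemma good_hs: "good (hs C ts)"
proof (induction ts rule: induct_list012)
  case 1 then show ?case using good_affine[of 0 0] by simp
next
  case (2 x) then show ?case using good_affine[of 0 0] by simp
next
  case (3 t t' ts)
  have "(\<lambda>z. max 0 (tline C t' z - tline C t z)) =
        (\<lambda>z. max 0 ((dslope C t' - dslope C t) * z + (C t' - dslope C t' * t' - C t + dslope C t * t)))"
    by (auto simp: fun_eq_iff tline_def algebra_simps)
  then have "good (\<lambda>z. max 0 (tline C t' z - tline C t z))" using good_maxlin by simp
  then show ?case using good_add[OF _ "3"(2)] by simp
qed

end


definition grid :: "nat \<Rightarrow> real list" where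
  "grid k = map (\<lambda>j. real_of_int j / real (Suc k)) (upto (- ((int (Suc k))^2)) ((int (Suc k))^2))"

lemma grid_sorted: "sorted (grid k)"
  unfolding grid_def sorted_map
  by (rule sorted_wrt_mono_rel[OF _ sorted_upto]) (auto intro: divide_right_mono)

lemma grid_ne: "grid k = hd (grid k) # tl (grid k)"
proof -
  have "(upto (- ((int (Suc k))^2)) ((int (Suc k))^2)) \<noteq> []" by simp
  then show ?thesis unfolding grid_def by (cases "(upto (- ((int (Suc k))^2)) ((int (Suc k))^2))") auto
qed

lemma zero_in_grid: "0 \<in> set (grid k)"
  unfolding grid_def by (auto intro!: image_eqI[where x=0])

definition psi :: "(real \<Rightarrow> real) \<Rightarrow> nat \<Rightarrow> real \<Rightarrow> real" where
  "psi C k z = tline C (hd (grid k)) z + hs C (grid k) z"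

lemma psi_le_C: "convex_on UNIV C \<Longrightarrow> psi C k z \<le> C z"
  unfolding psi_def using psi_le[of C "hd (grid k)" "tl (grid k)" z] grid_sorted[of k] grid_ne[of k]
  by simp

lemma psi_ge_tline: "s \<in> set (grid k) \<Longrightarrow> tline C s z \<le> psi C k z"
  unfolding psi_def using psi_ge[of s "hd (grid k)" "tl (grid k)" C z] grid_ne[of k] by simp

lemma psi_tendsto:
  fixes C :: "real \<Rightarrow> real"
  assumes cvx: "convex_on UNIV C"
  shows "(\<lambda>k. psi C k z) \<longlonglongrightarrow> C z"
proof -
  define m where "m k = real (Suc k)" for k
  define t where "t k = real_of_int \<lfloor>z * m k\<rfloor> / m k" for k
  have mpos: "m k > 0" for k by (simp add: m_def)
  have t_le: "t k \<le> z" for k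
  proof -
    have "real_of_int \<lfloor>z * m k\<rfloor> \<le> z * m k" by simp
    then show ?thesis using mpos[of k] by (simp add: t_def divide_le_eq)
  qed
  have t_ge: "z - 1 / m k \<le> t k" for k
  proof -
    have "z * m k - 1 \<le> real_of_int \<lfloor>z * m k\<rfloor>" by linarith
    then have "(z * m k - 1) / m k \<le> t k" unfolding t_def
      by (rule divide_right_mono) (use mpos[of k] in auto)
    moreover have "(z * m k - 1) / m k = z - 1 / m k" using mpos[of k] by (simp add: field_simps)
    ultimately show ?thesis by simp
  qed
  have m1: "1 / m k \<le> 1" for k by (simp add: m_def)
  have inv: "(\<lambda>k. 1 / m k) \<longlonglongrightarrow> 0"
    using LIMSEQ_inverse_real_of_nat by (simp add: m_def inverse_eq_divide)
  have tlim: "t \<longlonglongrightarrow> z"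
  proof (rule tendsto_sandwich[of "\<lambda>k. z - 1 / m k" _ _ "\<lambda>k. z"])
    show "\<forall>\<^sub>F k in sequentially. z - 1 / m k \<le> t k" using t_ge by simp
    show "\<forall>\<^sub>F k in sequentially. t k \<le> z" using t_le by simp
    show "(\<lambda>k. z - 1 / m k) \<longlonglongrightarrow> z" using tendsto_diff[OF tendsto_const inv, of z] by simp
  qed simp
  have cont: "continuous_on UNIV C" by (rule convex_on_continuous[OF open_UNIV cvx])
  have Clim: "(\<lambda>k. C (t k)) \<longlonglongrightarrow> C z"
    by (rule continuous_on_tendsto_compose[OF cont tlim]) auto
  define B where "B = \<bar>dslope C (z - 1)\<bar> + \<bar>dslope C z\<bar>"
  have rlim: "(\<lambda>k. C (t k) - B * (1 / m k)) \<longlonglongrightarrow> C z"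
    using tendsto_diff[OF Clim tendsto_mult[OF tendsto_const inv, of B]] by simp
  have ev_in: "\<forall>\<^sub>F k in sequentially. t k \<in> set (grid k)"
  proof -
    have "\<forall>\<^sub>F k in sequentially. nat \<lceil>\<bar>z\<bar>\<rceil> \<le> k" by (rule eventually_ge_at_top)
    then show ?thesis
    proof eventually_elim
      case (elim k)
      have zk: "\<bar>z\<bar> \<le> real k" using elim by linarith
      have mk: "m k = real k + 1" by (simp add: m_def)
      have "\<bar>z * m k\<bar> \<le> real k * m k" using zk mpos[of k] by (simp add: abs_mult mult_right_mono)
      then have b1: "- (real k * m k) \<le> z * m k" "z * m k \<le> real k * m k" by linarith+
      have lo: "- ((m k)^2) \<le> real_of_int \<lfloor>z * m k\<rfloor>"
        using b1(1) mk by (simp add: power2_eq_square algebra_simps) linarith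
      have hi: "real_of_int \<lfloor>z * m k\<rfloor> \<le> (m k)^2"
        using b1(2) mk by (simp add: power2_eq_square algebra_simps) linarith
      have e: "real_of_int ((int (Suc k))^2) = (m k)^2" by (simp add: m_def)
      have "real_of_int (- ((int (Suc k))^2)) \<le> real_of_int \<lfloor>z * m k\<rfloor>"
           "real_of_int \<lfloor>z * m k\<rfloor> \<le> real_of_int ((int (Suc k))^2)"
        using lo hi e by simp_all
      then have "- ((int (Suc k))^2) \<le> \<lfloor>z * m k\<rfloor>" "\<lfloor>z * m k\<rfloor> \<le> (int (Suc k))^2"
        by (simp_all only: of_int_le_iff)
      then show ?case unfolding grid_def t_def m_def by auto
    qed
  qed
  have ev_low: "\<forall>\<^sub>F k in sequentially. C (t k) - B * (1 / m k) \<le> psi C k z"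
    using ev_in
  proof eventually_elim
    case (elim k)
    have d1: "dslope C (z - 1) \<le> dslope C (t k)"
      using dslope_mono[OF cvx] t_ge[of k] m1[of k] by simp
    have d2: "dslope C (t k) \<le> dslope C z" using dslope_mono[OF cvx] t_le[of k] by simp
    have dB: "\<bar>dslope C (t k)\<bar> \<le> B" using d1 d2 unfolding B_def by linarith
    have zt: "0 \<le> z - t k" "z - t k \<le> 1 / m k" using t_le[of k] t_ge[of k] by linarith+
    have "\<bar>dslope C (t k) * (z - t k)\<bar> \<le> B * (1 / m k)"
      unfolding abs_mult using zt dB by (intro mult_mono) auto
    then have "C (t k) - B * (1 / m k) \<le> tline C (t k) z" unfolding tline_def by linarith
    also have "\<dots> \<le> psi C k z" by (rule psi_ge_tline[OF elim])
    finally show ?case .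
  qed
  show ?thesis
    by (rule tendsto_sandwich[OF ev_low _ rlim tendsto_const]) (simp add: psi_le_C[OF cvx])
qed


lemma ereal_arith:
  fixes P Q U Gp Gm :: ennreal
  assumes eq: "P + Gm = U + Gp + Q" and fin: "Q \<noteq> top" "Gm \<noteq> top" "Gp \<noteq> top"
  shows "enn2ereal P - enn2ereal Q = enn2ereal U + ereal (enn2real Gp - enn2real Gm)"
proof (cases "U = top")
  case True
  then have "P = top" using eq fin by (auto simp: top_add)
  then show ?thesis using True fin
    by (cases Q rule: ennreal_cases) auto
next
  case False
  have "P \<noteq> top"
  proof
    assume "P = top"
    then have "U + Gp + Q = top" using eq by (simp add: top_add)
    then show False using False fin by (simp add: ennreal_add_eq_top)
  qed
  then show ?thesis using False fin eq
    by (cases P rule: ennreal_cases; cases Q rule: ennreal_cases; cases U rule: ennreal_cases;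
        cases Gp rule: ennreal_cases; cases Gm rule: ennreal_cases)
       (auto simp flip: ennreal_plus simp: ennreal_inj)
qed

lemma ext_expect_decomp:
  fixes h g :: "'a \<Rightarrow> real"
  assumes hm: "h \<in> borel_measurable M" and gi: "integrable M g"
    and le: "\<And>x. x \<in> space M \<Longrightarrow> g x \<le> h x"
  shows "ext_expect M h = enn2ereal (\<integral>\<^sup>+x. ennreal (h x - g x) \<partial>M) + ereal (\<integral>x. g x \<partial>M)"
proof -
  have gm: "g \<in> borel_measurable M" using gi by auto
  have pw: "ennreal (h x) + ennreal (- g x) = ennreal (h x - g x) + ennreal (g x) + ennreal (- h x)"
    if "x \<in> space M" for x
  proof -
    have l: "g x \<le> h x" using le that .
    show ?thesis
    proof (cases "h x \<ge> 0")
      case h: True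
      show ?thesis
      proof (cases "g x \<ge> 0")
        case True
        then show ?thesis using h l by (simp add: ennreal_neg flip: ennreal_plus)
      next
        case False
        have "ennreal (h x - g x) = ennreal (h x + (- g x))" by simp
        also have "\<dots> = ennreal (h x) + ennreal (- g x)" using h False by (intro ennreal_plus) auto
        finally show ?thesis using h False by (simp add: ennreal_neg)
      qed
    next
      case False
      then show ?thesis using l by (simp add: ennreal_neg flip: ennreal_plus)
    qed
  qed
  have "(\<integral>\<^sup>+x. ennreal (h x) + ennreal (- g x) \<partial>M) =
        (\<integral>\<^sup>+x. ennreal (h x - g x) + ennreal (g x) + ennreal (- h x) \<partial>M)"
    by (rule nn_integral_cong) (rule pw)
  then have eq: "(\<integral>\<^sup>+x. ennreal (h x) \<partial>M) + (\<integral>\<^sup>+x. ennreal (- g x) \<partial>M) =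
     (\<integral>\<^sup>+x. ennreal (h x - g x) \<partial>M) + (\<integral>\<^sup>+x. ennreal (g x) \<partial>M) + (\<integral>\<^sup>+x. ennreal (- h x) \<partial>M)"
    using hm gm by (simp add: nn_integral_add)
  have f1: "(\<integral>\<^sup>+x. ennreal (- g x) \<partial>M) \<noteq> top" "(\<integral>\<^sup>+x. ennreal (g x) \<partial>M) \<noteq> top"
    using gi by auto
  have "(\<integral>\<^sup>+x. ennreal (- h x) \<partial>M) \<le> (\<integral>\<^sup>+x. ennreal (- g x) \<partial>M)"
    by (rule nn_integral_mono) (use le in \<open>auto intro!: ennreal_leI\<close>)
  then have f2: "(\<integral>\<^sup>+x. ennreal (- h x) \<partial>M) \<noteq> top" using f1 by (auto simp: top_unique)
  show ?thesis
    unfolding ext_expect_def real_lebesgue_integral_def[OF gi]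
    by (rule ereal_arith[OF eq f2 f1(1) f1(2)])
qed

context sl_setting
begin

lemma affine_eq: "(\<integral>x. \<alpha> * X x + \<beta> \<partial>M) = (\<integral>y. \<alpha> * Y y + \<beta> \<partial>N)"
proof -
  have "(\<integral>x. \<alpha> * X x + \<beta> \<partial>M) = \<alpha> * (\<integral>x. X x \<partial>M) + \<beta>"
    using intX by (simp add: M.prob_space)
  moreover have "(\<integral>x. \<alpha> * Y x + \<beta> \<partial>N) = \<alpha> * (\<integral>x. Y x \<partial>N) + \<beta>"
    using intY by (simp add: N.prob_space)
  ultimately show ?thesis using mean by simp
qed

lemma good_psi: "good (psi C k)"
proof -
  have "psi C k = (\<lambda>z. (dslope C (hd (grid k)) * z + (C (hd (grid k)) - dslope C (hd (grid k)) * hd (grid k)))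
      + hs C (grid k) z)"
    by (auto simp: fun_eq_iff psi_def tline_def algebra_simps)
  then show ?thesis using good_add[OF good_affine good_hs] by simp
qed

theorem convex_ineq:
  assumes cvx: "convex_on UNIV C"
  shows "ext_expect N (C \<circ> Y) \<le> ext_expect M (C \<circ> X)"
proof -
  have cont: "continuous_on UNIV C" by (rule convex_on_continuous[OF open_UNIV cvx])
  have [measurable]: "C \<in> borel_measurable borel" by (rule borel_measurable_continuous_onI[OF cont])
  have [measurable]: "X \<in> borel_measurable M" "Y \<in> borel_measurable N" using intX intY by auto
  define L where "L z = tline C 0 z" for z
  have Laff: "L = (\<lambda>z. dslope C 0 * z + C 0)" by (auto simp: fun_eq_iff L_def tline_def)
  have LC: "L z \<le> C z" for z unfolding L_def by (rule tline_le[OF cvx])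
  have Lpsi: "L z \<le> psi C k z" for k z unfolding L_def by (rule psi_ge_tline[OF zero_in_grid])
  have iLX: "integrable M (\<lambda>x. L (X x))" unfolding Laff using intX by auto
  have iLY: "integrable N (\<lambda>x. L (Y x))" unfolding Laff using intY by auto
  have Leq: "(\<integral>x. L (X x) \<partial>M) = (\<integral>y. L (Y y) \<partial>N)" unfolding Laff by (rule affine_eq)
  have [measurable]: "L \<in> borel_measurable borel" unfolding Laff by measurable
  have gp: "good (psi C k)" for k by (rule good_psi)
  have pXm: "(\<lambda>x. psi C k (X x)) \<in> borel_measurable M" for k using gp[of k] unfolding good_def by auto
  have pYm: "(\<lambda>x. psi C k (Y x)) \<in> borel_measurable N" for k using gp[of k] unfolding good_def by auto
  have stepk: "(\<integral>\<^sup>+y. ennreal (psi C k (Y y) - L (Y y)) \<partial>N) \<le> (\<integral>\<^sup>+x. ennreal (C (X x) - L (X x)) \<partial>M)" for k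
  proof -
    have iY: "integrable N (\<lambda>y. psi C k (Y y) - L (Y y))" using gp[of k] iLY unfolding good_def by auto
    have iX: "integrable M (\<lambda>x. psi C k (X x) - L (X x))" using gp[of k] iLX unfolding good_def by auto
    have "(\<integral>\<^sup>+y. ennreal (psi C k (Y y) - L (Y y)) \<partial>N) = ennreal (\<integral>y. psi C k (Y y) - L (Y y) \<partial>N)"
      by (rule nn_integral_eq_integral[OF iY]) (use Lpsi in auto)
    also have "(\<integral>y. psi C k (Y y) - L (Y y) \<partial>N) = (\<integral>y. psi C k (Y y) \<partial>N) - (\<integral>y. L (Y y) \<partial>N)"
      using gp[of k] iLY unfolding good_def by (simp add: Bochner_Integration.integral_diff)
    also have "\<dots> \<le> (\<integral>x. psi C k (X x) \<partial>M) - (\<integral>x. L (X x) \<partial>M)"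
      using gp[of k] Leq unfolding good_def by simp
    also have "\<dots> = (\<integral>x. psi C k (X x) - L (X x) \<partial>M)"
      using gp[of k] iLX unfolding good_def by (simp add: Bochner_Integration.integral_diff)
    finally have "(\<integral>\<^sup>+y. ennreal (psi C k (Y y) - L (Y y)) \<partial>N) \<le> ennreal (\<integral>x. psi C k (X x) - L (X x) \<partial>M)"
      by (simp add: ennreal_leI)
    also have "\<dots> = (\<integral>\<^sup>+x. ennreal (psi C k (X x) - L (X x)) \<partial>M)"
      by (rule nn_integral_eq_integral[OF iX, symmetric]) (use Lpsi in auto)
    also have "\<dots> \<le> (\<integral>\<^sup>+x. ennreal (C (X x) - L (X x)) \<partial>M)"
      by (rule nn_integral_mono) (use psi_le_C[OF cvx] in \<open>auto intro!: ennreal_leI\<close>)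
    finally show ?thesis .
  qed
  have lim: "liminf (\<lambda>k. ennreal (psi C k (Y y) - L (Y y))) = ennreal (C (Y y) - L (Y y))" for y
    by (rule lim_imp_Liminf) (auto intro!: tendsto_intros psi_tendsto[OF cvx])
  have key: "(\<integral>\<^sup>+y. ennreal (C (Y y) - L (Y y)) \<partial>N) \<le> (\<integral>\<^sup>+x. ennreal (C (X x) - L (X x)) \<partial>M)"
  proof -
    have "(\<integral>\<^sup>+y. ennreal (C (Y y) - L (Y y)) \<partial>N) = (\<integral>\<^sup>+y. liminf (\<lambda>k. ennreal (psi C k (Y y) - L (Y y))) \<partial>N)"
      by (simp add: lim)
    also have "\<dots> \<le> liminf (\<lambda>k. \<integral>\<^sup>+y. ennreal (psi C k (Y y) - L (Y y)) \<partial>N)"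
      by (rule nn_integral_liminf) (use pYm in measurable)
    also have "\<dots> \<le> (\<integral>\<^sup>+x. ennreal (C (X x) - L (X x)) \<partial>M)"
      by (rule Liminf_le[OF sequentially_bot always_eventually]) (rule allI, rule stepk)
    finally show ?thesis .
  qed
  have dX: "ext_expect M (C \<circ> X) = enn2ereal (\<integral>\<^sup>+x. ennreal (C (X x) - L (X x)) \<partial>M) + ereal (\<integral>x. L (X x) \<partial>M)"
    unfolding comp_def by (rule ext_expect_decomp[OF _ iLX]) (auto simp: LC)
  have dY: "ext_expect N (C \<circ> Y) = enn2ereal (\<integral>\<^sup>+x. ennreal (C (Y x) - L (Y x)) \<partial>N) + ereal (\<integral>x. L (Y x) \<partial>N)"
    unfolding comp_def by (rule ext_expect_decomp[OF _ iLY]) (auto simp: LC)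
  have "enn2ereal (\<integral>\<^sup>+x. ennreal (C (Y x) - L (Y x)) \<partial>N) \<le> enn2ereal (\<integral>\<^sup>+x. ennreal (C (X x) - L (X x)) \<partial>M)"
    using key by (simp add: less_eq_ennreal.rep_eq)
  then show ?thesis unfolding dX dY Leq by (rule add_right_mono)
qed

end


lemma hinge_convex: "convex_on UNIV (\<lambda>z::real. max 0 (z - t))"
  unfolding convex_on_def
proof (intro conjI ballI allI impI)
  fix x y u v :: real
  assume u: "u \<ge> 0" and v: "v \<ge> 0" and uv: "u + v = 1"
  have e0: "u * (x - t) + v * (y - t) = u * x + v * y - (u + v) * t" by (simp add: algebra_simps)
  have e: "u *\<^sub>R x + v *\<^sub>R y - t = u * (x - t) + v * (y - t)" using uv e0 by simp
  have "u * (x - t) \<le> u * max 0 (x - t)" using u by (intro mult_left_mono) auto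
  moreover have "v * (y - t) \<le> v * max 0 (y - t)" using v by (intro mult_left_mono) auto
  moreover have "0 \<le> u * max 0 (x - t) + v * max 0 (y - t)" using u v by simp
  ultimately show "max 0 (u *\<^sub>R x + v *\<^sub>R y - t) \<le> u * max 0 (x - t) + v * max 0 (y - t)"
    unfolding e by linarith
qed simp

lemma ext_expect_hinge:
  "ext_expect M ((\<lambda>z. max 0 (z - t)) \<circ> X) = enn2ereal (\<integral>\<^sup>+x. ennreal (X x - t) \<partial>M)"
proof -
  have "(\<integral>\<^sup>+x. ennreal (((\<lambda>z. max 0 (z - t)) \<circ> X) x) \<partial>M) = (\<integral>\<^sup>+x. ennreal (X x - t) \<partial>M)"
    by (intro nn_integral_cong) (simp add: max_def ennreal_neg)
  moreover have "(\<integral>\<^sup>+x. ennreal (- ((\<lambda>z. max 0 (z - t)) \<circ> X) x) \<partial>M) = 0"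
    by (simp add: ennreal_neg)
  ultimately show ?thesis unfolding ext_expect_def by (simp add: zero_ennreal.rep_eq)
qed

lemma cx_ge_iff_stop:
  fixes X :: "'a \<Rightarrow> real" and Y :: "'b \<Rightarrow> real"
  assumes "prob_space M" "prob_space N" "integrable M X" "integrable N Y"
    "(\<integral>x. X x \<partial>M) = (\<integral>y. Y y \<partial>N)"
  shows "cx_ge M X N Y \<longleftrightarrow> (\<forall>t. (\<integral>\<^sup>+y. ennreal (Y y - t) \<partial>N) \<le> (\<integral>\<^sup>+x. ennreal (X x - t) \<partial>M))"
proof
  assume c: "cx_ge M X N Y"
  show "\<forall>t. (\<integral>\<^sup>+y. ennreal (Y y - t) \<partial>N) \<le> (\<integral>\<^sup>+x. ennreal (X x - t) \<partial>M)"
  proof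
    fix t
    have "ext_expect N ((\<lambda>z. max 0 (z - t)) \<circ> Y) \<le> ext_expect M ((\<lambda>z. max 0 (z - t)) \<circ> X)"
      using c hinge_convex[of t] unfolding cx_ge_def by blast
    then show "(\<integral>\<^sup>+y. ennreal (Y y - t) \<partial>N) \<le> (\<integral>\<^sup>+x. ennreal (X x - t) \<partial>M)"
      unfolding ext_expect_hinge by (simp add: less_eq_ennreal.rep_eq)
  qed
next
  assume s: "\<forall>t. (\<integral>\<^sup>+y. ennreal (Y y - t) \<partial>N) \<le> (\<integral>\<^sup>+x. ennreal (X x - t) \<partial>M)"
  have sl: "sl_setting M N X Y"
    unfolding sl_setting_def sl_setting_axioms_def using assms s by blast
  have "\<forall>C::real \<Rightarrow> real. convex_on UNIV C \<longrightarrow> ext_expect M (C \<circ> X) \<ge> ext_expect N (C \<circ> Y)"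
    using sl_setting.convex_ineq[OF sl] by blast
  then show "cx_ge M X N Y" unfolding cx_ge_def using assms(3-5) by blast
qed


definition Phi :: "nat \<Rightarrow> real \<Rightarrow> real \<Rightarrow> (nat \<Rightarrow> real \<Rightarrow> real) \<Rightarrow> (nat \<Rightarrow> real) \<Rightarrow> real \<Rightarrow> ennreal" where
  "Phi n a b f c d = (\<integral>\<^sup>+x. ennreal ((\<Sum>i=1..n. c i * f i x) + d * f 0 x) \<partial>sig_space a b)"

lemma space_sig[simp]: "space (sig_space a b) = {a..b}"
  by (simp add: sig_space_def)

lemma sum_split0: "(\<Sum>j\<le>(n::nat). h j) = h 0 + (\<Sum>j=1..n. (h j :: real))"
proof -
  have "{..n} = insert 0 {1..n}" by (auto simp: not_less_eq_eq)
  then show ?thesis by simp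
qed

lemma exp_facts:
  assumes E: "is_experiment n a b f" and i: "i \<le> n"
  shows "f i \<in> borel_measurable (sig_space a b)"
    and "\<And>x. x \<in> {a..b} \<Longrightarrow> 0 \<le> f i x"
    and "integrable (sig_space a b) (f i)"
    and "(\<integral>x. f i x \<partial>sig_space a b) = 1"
proof -
  show m: "f i \<in> borel_measurable (sig_space a b)" using E i unfolding is_experiment_def by blast
  show nn: "\<And>x. x \<in> {a..b} \<Longrightarrow> 0 \<le> f i x" using E i unfolding is_experiment_def by blast
  have one: "(\<integral>\<^sup>+ x. ennreal (f i x) \<partial>sig_space a b) = 1" using E i unfolding is_experiment_def by blast
  show "integrable (sig_space a b) (f i)"
    by (rule integrableI_nonneg[OF m]) (use nn one in \<open>auto intro!: AE_I2\<close>)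
  show "(\<integral>x. f i x \<partial>sig_space a b) = 1"
    by (subst integral_eq_nn_integral[OF m]) (use nn one in \<open>auto intro!: AE_I2\<close>)
qed

lemma density_prob:
  assumes "g \<in> borel_measurable M" "(\<integral>\<^sup>+x. g x \<partial>M) = 1"
  shows "prob_space (density M g)"
proof
  have "emeasure (density M g) (space M) = (\<integral>\<^sup>+x. g x * indicator (space M) x \<partial>M)"
    by (rule emeasure_density) (use assms in auto)
  also have "\<dots> = (\<integral>\<^sup>+x. g x \<partial>M)" by (intro nn_integral_cong) simp
  finally show "emeasure (density M g) (space (density M g)) = 1" using assms by simp
qed

lemma lin_meas:
  assumes E: "is_experiment n a b f"
  shows "(\<lambda>x. \<Sum>i=1..n. c i * f i x) \<in> borel_measurable (sig_space a b)"
  by (intro borel_measurable_sum borel_measurable_times borel_measurable_const)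
     (use exp_facts(1)[OF E] in auto)

lemma lin_int:
  assumes E: "is_experiment n a b f"
  shows "integrable (sig_space a b) (\<lambda>x. \<Sum>i=1..n. c i * f i x)"
    and "(\<integral>x. (\<Sum>i=1..n. c i * f i x) \<partial>sig_space a b) = (\<Sum>i=1..n. c i)"
proof -
  show "integrable (sig_space a b) (\<lambda>x. \<Sum>i=1..n. c i * f i x)"
    by (intro Bochner_Integration.integrable_sum integrable_mult_right) (use exp_facts(3)[OF E] in auto)
  have "(\<integral>x. (\<Sum>i=1..n. c i * f i x) \<partial>sig_space a b) = (\<Sum>i=1..n. c i * (\<integral>x. f i x \<partial>sig_space a b))"
    using exp_facts(3)[OF E] by (subst Bochner_Integration.integral_sum) auto
  also have "\<dots> = (\<Sum>i=1..n. c i)" using exp_facts(4)[OF E] by simp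
  finally show "(\<integral>x. (\<Sum>i=1..n. c i * f i x) \<partial>sig_space a b) = (\<Sum>i=1..n. c i)" .
qed

lemma state0_facts:
  assumes E: "is_experiment n a b f" and pos: "\<forall>x\<in>{a..b}. f 0 x > 0"
  shows "prob_space (state0 a b f)"
    and "integrable (state0 a b f) (\<lambda>x. \<Sum>i=1..n. c i * lratio f x i)"
    and "(\<integral>x. (\<Sum>i=1..n. c i * lratio f x i) \<partial>state0 a b f) = (\<Sum>i=1..n. c i)"
    and "(\<integral>\<^sup>+x. ennreal ((\<Sum>i=1..n. c i * lratio f x i) - t) \<partial>state0 a b f) = Phi n a b f c (- t)"
proof -
  let ?S = "sig_space a b"
  have f0m: "f 0 \<in> borel_measurable ?S" using exp_facts(1)[OF E, of 0] by simp
  have f0i: "integrable ?S (f 0)" "(\<integral>x. f 0 x \<partial>?S) = 1" using exp_facts(3,4)[OF E, of 0] by simp_all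
  have f0nn: "AE x in ?S. 0 \<le> f 0 x" using pos by (auto intro!: AE_I2 less_imp_le)
  show "prob_space (state0 a b f)" unfolding state0_def
    by (rule density_prob) (use f0m f0i f0nn nn_integral_eq_integral[OF f0i(1) f0nn] in auto)
  have lm: "(\<lambda>x. \<Sum>i=1..n. c i * lratio f x i) \<in> borel_measurable ?S"
    unfolding lratio_def
    by (intro borel_measurable_sum borel_measurable_times borel_measurable_divide borel_measurable_const)
       (use exp_facts(1)[OF E] in auto)
  have pw: "f 0 x * (\<Sum>i=1..n. c i * lratio f x i) = (\<Sum>i=1..n. c i * f i x)" if "x \<in> {a..b}" for x
  proof -
    have "f 0 x > 0" using pos that by blast
    then have "f 0 x \<noteq> 0" by simp
    then show ?thesis unfolding lratio_def sum_distrib_left by (intro sum.cong) (auto simp: field_simps)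
  qed
  have "integrable (state0 a b f) (\<lambda>x. \<Sum>i=1..n. c i * lratio f x i) \<longleftrightarrow>
        integrable ?S (\<lambda>x. f 0 x *\<^sub>R (\<Sum>i=1..n. c i * lratio f x i))"
    unfolding state0_def by (rule integrable_density[OF lm f0m f0nn])
  also have "\<dots> \<longleftrightarrow> integrable ?S (\<lambda>x. \<Sum>i=1..n. c i * f i x)"
    by (rule Bochner_Integration.integrable_cong) (use pw in auto)
  finally show "integrable (state0 a b f) (\<lambda>x. \<Sum>i=1..n. c i * lratio f x i)"
    using lin_int(1)[OF E] by simp
  have "(\<integral>x. (\<Sum>i=1..n. c i * lratio f x i) \<partial>state0 a b f) =
        (\<integral>x. f 0 x *\<^sub>R (\<Sum>i=1..n. c i * lratio f x i) \<partial>?S)"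
    unfolding state0_def by (rule integral_density[OF lm f0m f0nn])
  also have "\<dots> = (\<integral>x. (\<Sum>i=1..n. c i * f i x) \<partial>?S)"
    by (rule Bochner_Integration.integral_cong) (use pw in auto)
  also have "\<dots> = (\<Sum>i=1..n. c i)" by (rule lin_int(2)[OF E])
  finally show "(\<integral>x. (\<Sum>i=1..n. c i * lratio f x i) \<partial>state0 a b f) = (\<Sum>i=1..n. c i)" .
  have "(\<integral>\<^sup>+x. ennreal ((\<Sum>i=1..n. c i * lratio f x i) - t) \<partial>state0 a b f) =
        (\<integral>\<^sup>+x. ennreal (f 0 x) * ennreal ((\<Sum>i=1..n. c i * lratio f x i) - t) \<partial>?S)"
    unfolding state0_def by (rule nn_integral_density) (use f0m lm in auto)
  also have "\<dots> = (\<integral>\<^sup>+x. ennreal ((\<Sum>i=1..n. c i * f i x) + (- t) * f 0 x) \<partial>?S)"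
  proof (rule nn_integral_cong)
    fix x assume x: "x \<in> space ?S"
    have "ennreal (f 0 x) * ennreal ((\<Sum>i=1..n. c i * lratio f x i) - t) =
          ennreal (f 0 x * ((\<Sum>i=1..n. c i * lratio f x i) - t))"
    proof -
      have "f 0 x > 0" using pos x by simp
      then show ?thesis by (subst ennreal_mult') auto
    qed
    also have "f 0 x * ((\<Sum>i=1..n. c i * lratio f x i) - t) = (\<Sum>i=1..n. c i * f i x) + (- t) * f 0 x"
      using pw[of x] x by (simp add: algebra_simps)
    finally show "ennreal (f 0 x) * ennreal ((\<Sum>i=1..n. c i * lratio f x i) - t) =
          ennreal ((\<Sum>i=1..n. c i * f i x) + (- t) * f 0 x)" .
  qed
  finally show "(\<integral>\<^sup>+x. ennreal ((\<Sum>i=1..n. c i * lratio f x i) - t) \<partial>state0 a b f) = Phi n a b f c (- t)"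
    unfolding Phi_def .
qed


lemma full_prior_nonneg:
  assumes q: "q \<in> priors n" and j: "j \<le> n" shows "0 \<le> full_prior n q j"
  using q j unfolding priors_def full_prior_def by auto

lemma full_prior_sum: "(\<Sum>j\<le>n. full_prior n q j) = 1"
proof -
  have "(\<Sum>j\<le>n. full_prior n q j) = full_prior n q 0 + (\<Sum>j=1..n. full_prior n q j)"
    by (rule sum_split0)
  also have "(\<Sum>j=1..n. full_prior n q j) = (\<Sum>j=1..n. q j)"
    by (intro sum.cong) (auto simp: full_prior_def)
  finally show ?thesis by (simp add: full_prior_def)
qed

lemma uncond_facts:
  assumes E: "is_experiment n a b f" and q: "q \<in> priors n"
  shows "prob_space (uncond n a b f q)"
    and "integrable (uncond n a b f q) (\<lambda>x. \<Sum>i=1..n. c i * posterior n f q x i)"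
    and "(\<integral>x. (\<Sum>i=1..n. c i * posterior n f q x i) \<partial>uncond n a b f q) = (\<Sum>i=1..n. c i * q i)"
    and "(\<integral>\<^sup>+x. ennreal ((\<Sum>i=1..n. c i * posterior n f q x i) - t) \<partial>uncond n a b f q) =
         Phi n a b f (\<lambda>i. (c i - t) * q i) (- t * full_prior n q 0)"
proof -
  let ?S = "sig_space a b"
  define u where "u x = (\<Sum>j\<le>n. full_prior n q j * f j x)" for x
  have fp: "0 \<le> full_prior n q j" if "j \<le> n" for j by (rule full_prior_nonneg[OF q that])
  have um: "u \<in> borel_measurable ?S" unfolding u_def
    by (intro borel_measurable_sum borel_measurable_times borel_measurable_const)
       (use exp_facts(1)[OF E] in auto)
  have unn: "0 \<le> u x" if "x \<in> {a..b}" for x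
    unfolding u_def using exp_facts(2)[OF E _ that] fp by (intro sum_nonneg) auto
  have unnAE: "AE x in ?S. 0 \<le> u x" by (rule AE_I2) (use unn in auto)
  have ui: "integrable ?S u" unfolding u_def
    by (intro Bochner_Integration.integrable_sum integrable_mult_right) (use exp_facts(3)[OF E] in auto)
  have uint: "(\<integral>x. u x \<partial>?S) = 1"
  proof -
    have "(\<integral>x. u x \<partial>?S) = (\<Sum>j\<le>n. full_prior n q j * (\<integral>x. f j x \<partial>?S))"
      unfolding u_def using exp_facts(3)[OF E] by (subst Bochner_Integration.integral_sum) auto
    also have "\<dots> = (\<Sum>j\<le>n. full_prior n q j)" using exp_facts(4)[OF E] by simp
    finally show ?thesis using full_prior_sum by simp
  qed
  have unc: "uncond n a b f q = density ?S (\<lambda>x. ennreal (u x))"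
    unfolding uncond_def u_def by simp
  show "prob_space (uncond n a b f q)" unfolding unc
    by (rule density_prob) (use um nn_integral_eq_integral[OF ui unnAE] uint in auto)
  have post: "posterior n f q x i = q i * f i x / u x" for x i
    unfolding posterior_def u_def by simp
  have pm: "(\<lambda>x. \<Sum>i=1..n. c i * posterior n f q x i) \<in> borel_measurable ?S"
    unfolding post
    by (intro borel_measurable_sum borel_measurable_times borel_measurable_divide borel_measurable_const um)
       (use exp_facts(1)[OF E] in auto)
  have pw: "u x * posterior n f q x i = q i * f i x" if x: "x \<in> {a..b}" and i: "i \<in> {1..n}" for x i
  proof (cases "u x = 0")
    case True
    have "full_prior n q i * f i x \<le> u x" unfolding u_def
      by (rule member_le_sum) (use i exp_facts(2)[OF E _ x] fp in \<open>auto intro: mult_nonneg_nonneg\<close>)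
    moreover have "full_prior n q i = q i" using i by (simp add: full_prior_def)
    moreover have "0 \<le> q i * f i x" using exp_facts(2)[OF E _ x] fp[of i] i \<open>full_prior n q i = q i\<close> i by simp
    ultimately have "q i * f i x = 0" using True by simp
    then show ?thesis using True by (simp add: post)
  next
    case False then show ?thesis by (simp add: post)
  qed
  have pws: "u x * (\<Sum>i=1..n. c i * posterior n f q x i) = (\<Sum>i=1..n. (c i * q i) * f i x)" if x: "x \<in> {a..b}" for x
    unfolding sum_distrib_left
  proof (intro sum.cong refl)
    fix i assume "i \<in> {1..n}"
    then show "u x * (c i * posterior n f q x i) = c i * q i * f i x" using pw[OF x, of i]
      by (simp add: algebra_simps)
  qed
  have "integrable (uncond n a b f q) (\<lambda>x. \<Sum>i=1..n. c i * posterior n f q x i) \<longleftrightarrow>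
        integrable ?S (\<lambda>x. u x *\<^sub>R (\<Sum>i=1..n. c i * posterior n f q x i))"
    unfolding unc by (rule integrable_density[OF pm um unnAE])
  also have "\<dots> \<longleftrightarrow> integrable ?S (\<lambda>x. \<Sum>i=1..n. (c i * q i) * f i x)"
    by (rule Bochner_Integration.integrable_cong) (use pws in auto)
  finally show "integrable (uncond n a b f q) (\<lambda>x. \<Sum>i=1..n. c i * posterior n f q x i)"
    using lin_int(1)[OF E] by simp
  have "(\<integral>x. (\<Sum>i=1..n. c i * posterior n f q x i) \<partial>uncond n a b f q) =
        (\<integral>x. u x *\<^sub>R (\<Sum>i=1..n. c i * posterior n f q x i) \<partial>?S)"
    unfolding unc by (rule integral_density[OF pm um unnAE])
  also have "\<dots> = (\<integral>x. (\<Sum>i=1..n. (c i * q i) * f i x) \<partial>?S)"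
    by (rule Bochner_Integration.integral_cong) (use pws in auto)
  also have "\<dots> = (\<Sum>i=1..n. c i * q i)" by (rule lin_int(2)[OF E])
  finally show "(\<integral>x. (\<Sum>i=1..n. c i * posterior n f q x i) \<partial>uncond n a b f q) = (\<Sum>i=1..n. c i * q i)" .
  have "(\<integral>\<^sup>+x. ennreal ((\<Sum>i=1..n. c i * posterior n f q x i) - t) \<partial>uncond n a b f q) =
        (\<integral>\<^sup>+x. ennreal (u x) * ennreal ((\<Sum>i=1..n. c i * posterior n f q x i) - t) \<partial>?S)"
    unfolding unc by (rule nn_integral_density) (use um pm in auto)
  also have "\<dots> = (\<integral>\<^sup>+x. ennreal ((\<Sum>i=1..n. ((c i - t) * q i) * f i x) + (- t * full_prior n q 0) * f 0 x) \<partial>?S)"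
  proof (rule nn_integral_cong)
    fix x assume x: "x \<in> space ?S"
    then have x': "x \<in> {a..b}" by simp
    have usplit: "u x = full_prior n q 0 * f 0 x + (\<Sum>i=1..n. q i * f i x)"
    proof -
      have "u x = full_prior n q 0 * f 0 x + (\<Sum>i=1..n. full_prior n q i * f i x)"
        unfolding u_def by (rule sum_split0)
      moreover have "(\<Sum>i=1..n. full_prior n q i * f i x) = (\<Sum>i=1..n. q i * f i x)"
        by (intro sum.cong) (auto simp: full_prior_def)
      ultimately show ?thesis by simp
    qed
    have "ennreal (u x) * ennreal ((\<Sum>i=1..n. c i * posterior n f q x i) - t) =
          ennreal (u x * ((\<Sum>i=1..n. c i * posterior n f q x i) - t))"
      using unn[OF x'] by (subst ennreal_mult') auto
    also have "u x * ((\<Sum>i=1..n. c i * posterior n f q x i) - t) =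
               (\<Sum>i=1..n. (c i * q i) * f i x) - t * u x"
      using pws[OF x'] by (simp add: algebra_simps)
    also have "(\<Sum>i=1..n. (c i * q i) * f i x) - t * u x =
               (\<Sum>i=1..n. ((c i - t) * q i) * f i x) + (- t * full_prior n q 0) * f 0 x"
      unfolding usplit by (simp add: algebra_simps sum_subtractf sum_distrib_left)
    finally show "ennreal (u x) * ennreal ((\<Sum>i=1..n. c i * posterior n f q x i) - t) =
        ennreal ((\<Sum>i=1..n. ((c i - t) * q i) * f i x) + (- t * full_prior n q 0) * f 0 x)" .
  qed
  finally show "(\<integral>\<^sup>+x. ennreal ((\<Sum>i=1..n. c i * posterior n f q x i) - t) \<partial>uncond n a b f q) =
         Phi n a b f (\<lambda>i. (c i - t) * q i) (- t * full_prior n q 0)"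
    unfolding Phi_def by simp
qed


lemma LB_iff_Phi:
  assumes Ef: "is_experiment n a b f" and Eg: "is_experiment n c d g"
  shows "LB_ge n a b f c d g \<longleftrightarrow>
    (\<forall>q\<in>priors n. \<forall>cc t. Phi n c d g (\<lambda>i. (cc i - t) * q i) (- t * full_prior n q 0)
                         \<le> Phi n a b f (\<lambda>i. (cc i - t) * q i) (- t * full_prior n q 0))"
proof -
  have "cx_ge (uncond n a b f q) (\<lambda>x. \<Sum>i=1..n. cc i * posterior n f q x i)
              (uncond n c d g q) (\<lambda>x. \<Sum>i=1..n. cc i * posterior n g q x i) \<longleftrightarrow>
        (\<forall>t. Phi n c d g (\<lambda>i. (cc i - t) * q i) (- t * full_prior n q 0)
                         \<le> Phi n a b f (\<lambda>i. (cc i - t) * q i) (- t * full_prior n q 0))"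
    if q: "q \<in> priors n" for q cc
  proof -
    have m: "(\<integral>x. (\<Sum>i=1..n. cc i * posterior n f q x i) \<partial>uncond n a b f q) =
             (\<integral>x. (\<Sum>i=1..n. cc i * posterior n g q x i) \<partial>uncond n c d g q)"
      by (simp only: uncond_facts(3)[OF Ef q] uncond_facts(3)[OF Eg q])
    show ?thesis
      by (subst cx_ge_iff_stop[OF uncond_facts(1)[OF Ef q] uncond_facts(1)[OF Eg q]
             uncond_facts(2)[OF Ef q] uncond_facts(2)[OF Eg q] m])
         (simp only: uncond_facts(4)[OF Ef q] uncond_facts(4)[OF Eg q])
  qed
  then show ?thesis unfolding LB_ge_def lcx_ge_def by auto
qed

lemma lcx_iff_Phi:
  assumes Ef: "is_experiment n a b f" and Eg: "is_experiment n c d g"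
    and pf: "\<forall>x\<in>{a..b}. f 0 x > 0" and pg: "\<forall>y\<in>{c..d}. g 0 y > 0"
  shows "lcx_ge n (state0 a b f) (lratio f) (state0 c d g) (lratio g) \<longleftrightarrow>
    (\<forall>cc t. Phi n c d g cc (- t) \<le> Phi n a b f cc (- t))"
proof -
  have "cx_ge (state0 a b f) (\<lambda>x. \<Sum>i=1..n. cc i * lratio f x i)
              (state0 c d g) (\<lambda>x. \<Sum>i=1..n. cc i * lratio g x i) \<longleftrightarrow>
        (\<forall>t. Phi n c d g cc (- t) \<le> Phi n a b f cc (- t))" for cc
  proof -
    have m: "(\<integral>x. (\<Sum>i=1..n. cc i * lratio f x i) \<partial>state0 a b f) =
             (\<integral>x. (\<Sum>i=1..n. cc i * lratio g x i) \<partial>state0 c d g)"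
      by (simp only: state0_facts(3)[OF Ef pf] state0_facts(3)[OF Eg pg])
    show ?thesis
      by (subst cx_ge_iff_stop[OF state0_facts(1)[OF Ef pf] state0_facts(1)[OF Eg pg]
             state0_facts(2)[OF Ef pf] state0_facts(2)[OF Eg pg] m])
         (simp only: state0_facts(4)[OF Ef pf] state0_facts(4)[OF Eg pg])
  qed
  then show ?thesis unfolding lcx_ge_def by auto
qed

theorem proposition1:
  fixes n :: nat and a b c d :: real and f g :: "nat \<Rightarrow> real \<Rightarrow> real"
  assumes "is_experiment n a b f" and "is_experiment n c d g"
    and "\<forall>x\<in>{a..b}. f 0 x > 0" and "\<forall>y\<in>{c..d}. g 0 y > 0"
  shows "LB_ge n a b f c d g \<longleftrightarrow> lcx_ge n (state0 a b f) (lratio f) (state0 c d g) (lratio g)"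
  unfolding LB_iff_Phi[OF assms(1,2)] lcx_iff_Phi[OF assms]
proof (intro iffI allI ballI)
  fix cc :: "nat \<Rightarrow> real" and t :: real
  assume H: "\<forall>q\<in>priors n. \<forall>cc t. Phi n c d g (\<lambda>i. (cc i - t) * q i) (- t * full_prior n q 0)
                         \<le> Phi n a b f (\<lambda>i. (cc i - t) * q i) (- t * full_prior n q 0)"
  define N where "N = real n + 1"
  have Npos: "N > 0" by (simp add: N_def)
  define q where "q i = 1 / N" for i :: nat
  have sq: "(\<Sum>i=1..n. q i) = real n / N" by (simp add: q_def)
  have qp: "q \<in> priors n"
    unfolding priors_def using Npos sq by (auto simp: q_def N_def)
  have q0: "full_prior n q 0 = 1 / N"
    unfolding full_prior_def sq using Npos by (simp add: N_def field_simps)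
  define T where "T = t * N"
  define bb where "bb i = T + cc i * N" for i
  have e1: "(\<lambda>i. (bb i - T) * q i) = cc" using Npos by (auto simp: fun_eq_iff bb_def q_def)
  have e2: "- T * full_prior n q 0 = - t" using Npos by (simp add: q0 T_def)
  show "Phi n c d g cc (- t) \<le> Phi n a b f cc (- t)"
    using H qp by (metis e1 e2)
next
  fix q cc t
  assume H: "\<forall>cc t. Phi n c d g cc (- t) \<le> Phi n a b f cc (- t)"
  show "Phi n c d g (\<lambda>i. (cc i - t) * q i) (- t * full_prior n q 0)
        \<le> Phi n a b f (\<lambda>i. (cc i - t) * q i) (- t * full_prior n q 0)"
    using H[rule_format, of "\<lambda>i. (cc i - t) * q i" "t * full_prior n q 0"] by simp
qed

end
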